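(* Let $b(\lambda)=\frac14\lambda^4+\frac12p\lambda^2+q\lambda$ with $p<0$, $q\in\mathbb{R}$, and $B_\eta(\lambda)=\eta\lambda-b(\lambda)$. Define $\lambda:\mathbb{R}\to\mathbb{R}$ by: for $\eta\neq q$, $\lambda(\eta)$ is the unique point at which $B_\eta$ attains its global maximum (this point lies below $-\sqrt{-p}$ when $\eta<q$ and above $\sqrt{-p}$ when $\eta>q$), and $\lambda(q)=\sqrt{-p}$. Then $\eta\mapsto\lambda(\eta)$ maps $\mathbb{R}$ onto $\mathbb{R}\setminus[-\sqrt{-p},\sqrt{-p})$, and it is (a) differentiable on $\mathbb{R}\setminus\{q\}$, (b) continuous from the right at $\eta=q$, and (c) increasing and injective on $\mathbb{R}$. *)

theory Defs
  imports Complex_Main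
begin

definition bfun :: "real \<Rightarrow> real \<Rightarrow> real \<Rightarrow> real" where
  "bfun p q l = l ^ 4 / 4 + p * l ^ 2 / 2 + q * l"

definition Bfun :: "real \<Rightarrow> real \<Rightarrow> real \<Rightarrow> real \<Rightarrow> real" where
  "Bfun p q \<eta> l = \<eta> * l - bfun p q l"

definition lam :: "real \<Rightarrow> real \<Rightarrow> real \<Rightarrow> real" where
  "lam p q \<eta> = (if \<eta> = q then sqrt (- p)
                 else (THE l. \<forall>\<mu>. Bfun p q \<eta> \<mu> \<le> Bfun p q \<eta> l))"

end

theory Submission
  imports Defs
begin

lemma key_identity:
  fixes p q \<eta> l \<mu> :: real
  assumes "\<eta> - q = l^3 + p*l"
  shows "Bfun p q \<eta> l - Bfun p q \<eta> \<mu> = (l-\<mu>)^2 * (((\<mu>+l)^2 + 2*l^2 + 2*p)/4)"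
proof -
  have e: "\<eta> = l^3 + p*l + q" using assms by simp
  have "4 * (Bfun p q \<eta> l - Bfun p q \<eta> \<mu>) = (l-\<mu>)^2 * ((\<mu>+l)^2 + 2*l^2 + 2*p)"
    unfolding Bfun_def bfun_def e by (simp add: algebra_simps) algebra
  then show ?thesis by simp
qed

lemma max_unique:
  fixes p q \<eta> l :: real
  assumes "\<eta> - q = l^3 + p*l" "l^2 > -p"
  shows "(\<forall>\<mu>. Bfun p q \<eta> \<mu> \<le> Bfun p q \<eta> l)" "\<And>m. (\<forall>\<mu>. Bfun p q \<eta> \<mu> \<le> Bfun p q \<eta> m) \<Longrightarrow> m = l"
proof -
  have pos: "((\<mu>+l)^2 + 2*l^2 + 2*p)/4 > 0" for \<mu>
  proof -
    have h: "0 \<le> (\<mu>+l)^2" by simp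
    have "(\<mu>+l)^2 + 2*l^2 + 2*p > 0" using h assms(2) by linarith
    then show ?thesis by simp
  qed
  show "\<forall>\<mu>. Bfun p q \<eta> \<mu> \<le> Bfun p q \<eta> l"
  proof
    fix \<mu>
    have "(l-\<mu>)^2 * (((\<mu>+l)^2 + 2*l^2 + 2*p)/4) \<ge> 0" using pos[of \<mu>] by simp
    then show "Bfun p q \<eta> \<mu> \<le> Bfun p q \<eta> l" using key_identity[OF assms(1), of \<mu>] by linarith
  qed
  fix m assume "\<forall>\<mu>. Bfun p q \<eta> \<mu> \<le> Bfun p q \<eta> m"
  then have "Bfun p q \<eta> l \<le> Bfun p q \<eta> m" by blast
  then have "(l-m)^2 * (((m+l)^2 + 2*l^2 + 2*p)/4) \<le> 0" using key_identity[OF assms(1), of m] by linarith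
  then have "(l-m)^2 \<le> 0" using pos[of m] by (simp add: mult_le_0_iff)
  then show "m = l" by simp
qed

lemma exists_pos:
  fixes p c :: real
  assumes "p < 0" "c > 0"
  shows "\<exists>l. l > sqrt (-p) \<and> l^3 + p*l = c"
proof -
  define s where "s = sqrt (-p)"
  have s: "s > 0" "s^2 = -p" using assms by (auto simp: s_def)
  define x where "x = s + c + 1"
  have pe: "p = -(s^2)" using s by simp
  have "x^3 + p*x = x*(x-s)*(x+s)" unfolding pe by (simp add: algebra_simps power2_eq_square power3_eq_cube)
  also have "\<dots> \<ge> 1 * (c+1) * 1"
    using s assms unfolding x_def by (intro mult_mono) auto
  finally have hx: "x^3 + p*x \<ge> c" by simp
  have hs: "s^3 + p*s = 0" unfolding pe by (simp add: power3_eq_cube power2_eq_square algebra_simps)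
  have "\<exists>l. s \<le> l \<and> l \<le> x \<and> l^3 + p*l = c"
    apply (rule IVT'[where f="\<lambda>l. l^3 + p*l"])
    using hx hs assms unfolding x_def by (auto intro!: continuous_intros)
  then obtain l where "s \<le> l" "l^3 + p*l = c" by blast
  moreover have "l \<noteq> s" using hs assms calculation by auto
  ultimately show ?thesis unfolding s_def by (intro exI[of _ l]) auto
qed

lemma exists_neg:
  fixes p c :: real
  assumes "p < 0" "c < 0"
  shows "\<exists>l. l < - sqrt (-p) \<and> l^3 + p*l = c"
proof -
  obtain l where "l > sqrt (-p)" "l^3 + p*l = -c" using exists_pos[of p "-c"] assms by auto
  then show ?thesis by (intro exI[of _ "-l"]) (auto simp: power3_eq_cube)
qed

lemma P_strict:
  fixes p a b :: real
  assumes "p < 0" "a < b" "a < - sqrt (-p) \<or> a \<ge> sqrt (-p)" "b < - sqrt (-p) \<or> b \<ge> sqrt (-p)"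
  shows "a^3 + p*a < b^3 + p*b"
proof -
  define s where "s = sqrt (-p)"
  have s: "s > 0" "s^2 = -p" using assms by (auto simp: s_def)
  have fac: "b^3 + p*b - (a^3 + p*a) = (b-a)*(b^2+a*b+a^2+p)"
    by (simp add: algebra_simps power2_eq_square power3_eq_cube)
  show ?thesis
  proof (cases "a \<ge> s")
    case True
    then have "b > s" using assms s_def by auto
    have "a*b \<ge> 0" using True \<open>b > s\<close> s by simp
    moreover have "s^2 < b^2" using \<open>b > s\<close> s(1) by (intro power_strict_mono) auto
    ultimately have "b^2+a*b+a^2+p > 0" using s zero_le_power2[of a] by linarith
    then have "(b-a)*(b^2+a*b+a^2+p) > 0" using assms(2) by (intro mult_pos_pos) auto
    then show ?thesis using fac by linarith
  next
    case False
    then have a: "a < -s" using assms(3) s_def by auto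
    show ?thesis
    proof (cases "b \<ge> s")
      case True
      have "s^2 < (-a)^2" using a s(1) by (intro power_strict_mono) auto
      then have "a^2 > s^2" by simp
      then have "a^3 + p*a = a*(a^2 - s^2)" using s by (simp add: power2_eq_square power3_eq_cube algebra_simps)
      moreover have "a*(a^2 - s^2) < 0" using \<open>a^2 > s^2\<close> a s by (simp add: mult_neg_pos)
      moreover have "s^2 \<le> b^2" using True s(1) by (intro power_mono) auto
      then have "b*(b^2-s^2) \<ge> 0" using True s by simp
      moreover have "b^3 + p*b = b*(b^2 - s^2)" using s by (simp add: power2_eq_square power3_eq_cube algebra_simps)
      ultimately show ?thesis by linarith
    next
      case False
      then have b: "b < -s" using assms(4) s_def by auto
      have "a*b \<ge> 0" using a b s by (simp add: mult_nonpos_nonpos)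
      moreover have "s^2 < (-a)^2" using a s(1) by (intro power_strict_mono) auto
      then have "a^2 > s^2" by simp
      ultimately have "b^2+a*b+a^2+p > 0" using s zero_le_power2[of b] by linarith
      then have "(b-a)*(b^2+a*b+a^2+p) > 0" using assms(2) by (intro mult_pos_pos) auto
      then show ?thesis using fac by linarith
    qed
  qed
qed

theorem proposition3p4:
  fixes p q :: real
  assumes "p < 0"
  shows "(\<forall>\<eta>. \<eta> \<noteq> q \<longrightarrow> (\<exists>!l. \<forall>\<mu>. Bfun p q \<eta> \<mu> \<le> Bfun p q \<eta> l))
       \<and> (\<forall>\<eta>. \<eta> < q \<longrightarrow> lam p q \<eta> < - sqrt (- p))
       \<and> (\<forall>\<eta>. \<eta> > q \<longrightarrow> lam p q \<eta> > sqrt (- p))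
       \<and> range (lam p q) = UNIV - {- sqrt (- p)..<sqrt (- p)}
       \<and> (\<forall>\<eta>. \<eta> \<noteq> q \<longrightarrow> lam p q differentiable (at \<eta>))
       \<and> continuous (at_right q) (lam p q)
       \<and> mono (lam p q) \<and> inj (lam p q)"
proof -
  define s where "s = sqrt (-p)"
  have s: "s > 0" "s^2 = -p" using assms by (auto simp: s_def)
  define A where "A = {l::real. l < -s \<or> l \<ge> s}"
  define P where "P = (\<lambda>l::real. l^3 + p*l)"
  have Pmono: "a \<in> A \<Longrightarrow> b \<in> A \<Longrightarrow> a < b \<Longrightarrow> P a < P b" for a b
    using P_strict[OF assms, of a b] unfolding A_def P_def s_def by auto
  have Pinj: "a \<in> A \<Longrightarrow> b \<in> A \<Longrightarrow> P a = P b \<Longrightarrow> a = b" for a b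
    using Pmono[of a b] Pmono[of b a] by (cases a b rule: linorder_cases) auto
  have sq_gt: "l^2 > -p" if "l > s \<or> l < -s" for l
  proof -
    have "\<bar>l\<bar> > s" using that by auto
    then have "s^2 < \<bar>l\<bar>^2" using s(1) by (intro power_strict_mono) auto
    then show ?thesis using s(2) by simp
  qed
  have main: "\<exists>l. (\<eta> < q \<longrightarrow> l < -s) \<and> (\<eta> > q \<longrightarrow> l > s) \<and> (\<eta> \<noteq> q \<longrightarrow> l^2 > -p) \<and> P l = \<eta> - q" for \<eta>
  proof (cases \<eta> q rule: linorder_cases)
    case less
    then obtain l where "l < -s" "P l = \<eta> - q" using exists_neg[OF assms, of "\<eta> - q"] unfolding s_def P_def by auto
    then show ?thesis using less sq_gt by auto
  next
    case equal
    have "P s = 0" using s by (simp add: P_def power3_eq_cube power2_eq_square algebra_simps)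
    then show ?thesis using equal by auto
  next
    case greater
    then obtain l where "l > s" "P l = \<eta> - q" using exists_pos[OF assms, of "\<eta> - q"] unfolding s_def P_def by auto
    then show ?thesis using greater sq_gt by auto
  qed
  have lamprop: "(\<eta> < q \<longrightarrow> lam p q \<eta> < -s) \<and> (\<eta> > q \<longrightarrow> lam p q \<eta> > s) \<and> lam p q \<eta> \<in> A \<and> P (lam p q \<eta>) = \<eta> - q" for \<eta>
  proof (cases "\<eta> = q")
    case True
    have "P s = 0" using s by (simp add: P_def power3_eq_cube power2_eq_square algebra_simps)
    then show ?thesis using True by (simp add: lam_def s_def A_def)
  next
    case False
    obtain l where l: "(\<eta> < q \<longrightarrow> l < -s)" "(\<eta> > q \<longrightarrow> l > s)" "l^2 > -p" "P l = \<eta> - q"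
      using main[of \<eta>] False by auto
    have e: "\<eta> - q = l^3 + p*l" using l(4) by (simp add: P_def)
    note mu = max_unique[OF e l(3)]
    have "lam p q \<eta> = (THE l. \<forall>\<mu>. Bfun p q \<eta> \<mu> \<le> Bfun p q \<eta> l)" unfolding lam_def using False by simp
    also have "\<dots> = l" apply (rule the_equality) apply (rule mu(1)) apply (erule mu(2)) done
    finally have "lam p q \<eta> = l" .
    have "l < -s \<or> l \<ge> s" using l(1,2) False by (cases \<eta> q rule: linorder_cases) auto
    then show ?thesis using l(1,2,4) \<open>lam p q \<eta> = l\<close> unfolding A_def by simp
  qed
  have uniq: "\<forall>\<eta>. \<eta> \<noteq> q \<longrightarrow> (\<exists>!l. \<forall>\<mu>. Bfun p q \<eta> \<mu> \<le> Bfun p q \<eta> l)"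
  proof (intro allI impI)
    fix \<eta> assume "\<eta> \<noteq> q"
    then obtain l where l: "l^2 > -p" "P l = \<eta> - q" using main[of \<eta>] by auto
    show "\<exists>!l. \<forall>\<mu>. Bfun p q \<eta> \<mu> \<le> Bfun p q \<eta> l"
    proof -
      have e: "\<eta> - q = l^3 + p*l" using l(2) by (simp add: P_def)
      show ?thesis using max_unique[OF e l(1)] by blast
    qed
  qed
  have inv: "a \<in> A \<Longrightarrow> lam p q (P a + q) = a" for a
    using lamprop[of "P a + q"] Pinj[of "lam p q (P a + q)" a] by auto
  have smono: "\<eta>1 < \<eta>2 \<Longrightarrow> lam p q \<eta>1 < lam p q \<eta>2" for \<eta>1 \<eta>2
  proof (rule ccontr)
    assume "\<eta>1 < \<eta>2" "\<not> lam p q \<eta>1 < lam p q \<eta>2"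
    then have "lam p q \<eta>2 = lam p q \<eta>1 \<or> lam p q \<eta>2 < lam p q \<eta>1" by auto
    then show False
    proof
      assume "lam p q \<eta>2 = lam p q \<eta>1"
      then show False using lamprop[of \<eta>1] lamprop[of \<eta>2] \<open>\<eta>1 < \<eta>2\<close> by auto
    next
      assume lt: "lam p q \<eta>2 < lam p q \<eta>1"
      show False using Pmono[OF _ _ lt] lamprop[of \<eta>1] lamprop[of \<eta>2] \<open>\<eta>1 < \<eta>2\<close> by auto
    qed
  qed
  have mono: "mono (lam p q)"
    by (rule monoI) (metis less_eq_real_def smono)
  have inj: "inj (lam p q)"
    by (rule injI) (metis linorder_neqE_linordered_idom less_irrefl smono)
  have rng: "range (lam p q) = UNIV - {- sqrt (- p)..<sqrt (- p)}"
  proof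
    show "range (lam p q) \<subseteq> UNIV - {- sqrt (- p)..<sqrt (- p)}"
    proof
      fix y assume "y \<in> range (lam p q)"
      then obtain \<eta> where "y = lam p q \<eta>" by blast
      then have "y \<in> A" using lamprop[of \<eta>] by simp
      then show "y \<in> UNIV - {- sqrt (- p)..<sqrt (- p)}" unfolding A_def s_def by auto
    qed
    show "UNIV - {- sqrt (- p)..<sqrt (- p)} \<subseteq> range (lam p q)"
    proof
      fix a assume "a \<in> UNIV - {- sqrt (- p)..<sqrt (- p)}"
      then have "a \<in> A" unfolding A_def s_def by auto
      then show "a \<in> range (lam p q)" using inv[of a] by (metis rangeI)
    qed
  qed
  have contP: "isCont (\<lambda>z. P z + q) z" for z unfolding P_def by (intro continuous_intros)
  have diff: "\<forall>\<eta>. \<eta> \<noteq> q \<longrightarrow> lam p q differentiable (at \<eta>)"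
  proof (intro allI impI)
    fix \<eta> assume ne: "\<eta> \<noteq> q"
    define x where "x = lam p q \<eta>"
    have x: "\<bar>x\<bar> > s" using lamprop[of \<eta>] ne unfolding x_def by (cases \<eta> q rule: linorder_cases) auto
    have eta: "\<eta> = P x + q" using lamprop[of \<eta>] unfolding x_def by simp
    define d where "d = (\<bar>x\<bar> - s)/2"
    have d: "d > 0" using x by (simp add: d_def)
    have "isCont (lam p q) (P x + q)"
    proof (rule isCont_inverse_function[OF d, where f="\<lambda>z. P z + q" and g="lam p q"])
      fix z assume "\<bar>z - x\<bar> \<le> d"
      then have "\<bar>z\<bar> > s" using x unfolding d_def
        by (cases "x \<ge> 0"; cases "z \<ge> 0"; cases "z \<ge> x") (simp_all add: field_simps)
      then have "z \<in> A" unfolding A_def by auto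
      then show "lam p q (P z + q) = z" by (rule inv)
    next
      fix z assume "\<bar>z - x\<bar> \<le> d" show "isCont (\<lambda>z. P z + q) z" by (rule contP)
    qed
    then have cont: "isCont (lam p q) \<eta>" using eta by simp
    have der: "DERIV (\<lambda>z. P z + q) (lam p q \<eta>) :> 3 * x^2 + p"
      unfolding P_def x_def by (auto intro!: derivative_eq_intros simp: power2_eq_square)
    have "3 * x^2 + p \<noteq> 0"
    proof -
      have "s < x \<or> x < -s" using x by (cases "x \<ge> 0") auto
      then have "x^2 > -p" by (rule sq_gt)
      moreover have "x^2 \<ge> 0" by simp
      ultimately have "3*x^2 + p > 0" by linarith
      then show ?thesis by simp
    qed
    then have "DERIV (lam p q) \<eta> :> inverse (3 * x^2 + p)"
      by (rule DERIV_inverse_function[where g="lam p q" and x=\<eta> and f="\<lambda>z. P z + q", OF der, of "\<eta> - 1" "\<eta> + 1"])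
         (use lamprop cont in auto)
    then show "lam p q differentiable (at \<eta>)" unfolding real_differentiable_def by blast
  qed
  have rc: "continuous (at_right q) (lam p q)"
    unfolding continuous_within
  proof (rule order_tendstoI)
    fix a assume "a < lam p q q"
    then have "a < s" by (simp add: lam_def s_def)
    show "eventually (\<lambda>y. a < lam p q y) (at_right q)"
      unfolding eventually_at_right_field
      using lamprop \<open>a < s\<close> by (intro exI[of _ "q+1"]) (auto, smt (verit))
  next
    fix a assume "a > lam p q q"
    then have as: "a > s" by (simp add: lam_def s_def)
    then have aA: "a \<in> A" unfolding A_def by auto
    have "P a + q > P s + q" using Pmono[of s a] aA as by (auto simp: A_def)
    moreover have "P s = 0" using s by (simp add: P_def power3_eq_cube power2_eq_square algebra_simps)
    ultimately have b: "P a + q > q" by simp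
    show "eventually (\<lambda>y. lam p q y < a) (at_right q)"
      unfolding eventually_at_right_field
      using b smono inv[OF aA] by (intro exI[of _ "P a + q"]) metis
  qed
  show ?thesis using uniq lamprop rng diff rc mono inj unfolding s_def by blast
qed

end
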